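(* Let $G$ be a symmetric star topology with compute nodes $V_C$, where $w_v$ is the bandwidth of the edges between compute node $v$ and the center. Let $R,S$ be sets with $|R|<|S|$, $N=|R|+|S|$, initially partitioned among the compute nodes with $N_v$ elements (of $R$ and $S$ together) at node $v$. Let $V_\alpha=\{v\in V_C:\min\{N_v,N-N_v\}<|R|\}$ and $V_\beta=V_C\setminus V_\alpha$. Then any algorithm computing $R\times S$ has (tuple) cost $\Omega(C)$, where \[C=\max\Big\{\max_{v\in V_\alpha}\frac{\min\{N_v,N-N_v\}}{w_v},\ \max_{v\in V_\beta}\frac{|R|}{w_v}\Big\}.\]
   Context: Topology-aware model: the network is a directed graph; each edge $e$ has bandwidth $w_e>0$; compute nodes store data and compute, other nodes only route. A symmetric star topology has compute nodes each connected to a single central routing node by an edge in each direction with equal bandwidth. The input is partitioned without duplication; the algorithm knows topology, bandwidths and local fragment sizes. Computation proceeds in synchronous rounds; the tuple cost of a round is $\max_e|Y(e)|/w_e$ with $|Y(e)|$ the number of elements routed through edge $e$; total cost is the sum over rounds. Computing $R\times S$ means every pair $(r,s)\in R\times S$ is emitted by at least one compute node holding both $r$ and $s$. *)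

theory Defs
  imports Main "HOL.Real"
begin

text \<open>Symmetric star topology: compute nodes are the elements of a finite set V of naturals,
  plus an implicit central routing node. Compute node v is connected to the centre by an edge
  v -> centre and an edge centre -> v, both of bandwidth w v.\<close>

type_synonym elem = "nat + nat"

text \<open>A round: snd u v is the set of elements compute node u sends to compute node v
  (routed along u -> centre -> v).\<close>
type_synonym round = "nat \<Rightarrow> nat \<Rightarrow> elem set"

definition input_elems :: "nat set \<Rightarrow> nat set \<Rightarrow> elem set" where
  "input_elems R S = Inl ` R \<union> Inr ` S"

definition init_state :: "nat set \<Rightarrow> nat set \<Rightarrow> (elem \<Rightarrow> nat) \<Rightarrow> nat \<Rightarrow> elem set" where
  "init_state R S loc v = {x \<in> input_elems R S. loc x = v}"

definition step :: "(nat \<Rightarrow> elem set) \<Rightarrow> round \<Rightarrow> nat \<Rightarrow> elem set" where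
  "step K r v = K v \<union> (\<Union>u. r u v)"

fun exec :: "(nat \<Rightarrow> elem set) \<Rightarrow> round list \<Rightarrow> nat \<Rightarrow> elem set" where
  "exec K [] = K"
| "exec K (r # rs) = exec (step K r) rs"

fun valid_rounds :: "nat set \<Rightarrow> (nat \<Rightarrow> elem set) \<Rightarrow> round list \<Rightarrow> bool" where
  "valid_rounds V K [] = True"
| "valid_rounds V K (r # rs) =
     ((\<forall>u v. r u v \<subseteq> K u \<and> (r u v \<noteq> {} \<longrightarrow> u \<in> V \<and> v \<in> V))
      \<and> valid_rounds V (step K r) rs)"

text \<open>Elements routed through edge v -> centre, and through edge centre -> v.\<close>
definition out_load :: "nat set \<Rightarrow> round \<Rightarrow> nat \<Rightarrow> elem set" where
  "out_load V r v = (\<Union>x\<in>V - {v}. r v x)"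

definition in_load :: "nat set \<Rightarrow> round \<Rightarrow> nat \<Rightarrow> elem set" where
  "in_load V r v = (\<Union>u\<in>V - {v}. r u v)"

definition round_cost :: "nat set \<Rightarrow> (nat \<Rightarrow> real) \<Rightarrow> round \<Rightarrow> real" where
  "round_cost V w r =
     Max ((\<lambda>v. real (card (out_load V r v)) / w v) ` V
          \<union> (\<lambda>v. real (card (in_load V r v)) / w v) ` V)"

definition total_cost :: "nat set \<Rightarrow> (nat \<Rightarrow> real) \<Rightarrow> round list \<Rightarrow> real" where
  "total_cost V w rs = (\<Sum>r\<leftarrow>rs. round_cost V w r)"

text \<open>The algorithm computes R x S: every pair is held (and hence can be emitted) by some
  compute node at the end (knowledge is monotone over rounds).\<close>
definition computes_product :: "nat set \<Rightarrow> nat set \<Rightarrow> nat set \<Rightarrow> (nat \<Rightarrow> elem set) \<Rightarrow> bool" where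
  "computes_product V R S K \<longleftrightarrow>
     (\<forall>r\<in>R. \<forall>s\<in>S. \<exists>v\<in>V. Inl r \<in> K v \<and> Inr s \<in> K v)"

definition Nv :: "nat set \<Rightarrow> nat set \<Rightarrow> (elem \<Rightarrow> nat) \<Rightarrow> nat \<Rightarrow> nat" where
  "Nv R S loc v = card (init_state R S loc v)"

definition mv :: "nat set \<Rightarrow> nat set \<Rightarrow> (elem \<Rightarrow> nat) \<Rightarrow> nat \<Rightarrow> nat" where
  "mv R S loc v = min (Nv R S loc v) (card R + card S - Nv R S loc v)"

definition V_alpha :: "nat set \<Rightarrow> nat set \<Rightarrow> nat set \<Rightarrow> (elem \<Rightarrow> nat) \<Rightarrow> nat set" where
  "V_alpha V R S loc = {v \<in> V. mv R S loc v < card R}"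

definition V_beta :: "nat set \<Rightarrow> nat set \<Rightarrow> nat set \<Rightarrow> (elem \<Rightarrow> nat) \<Rightarrow> nat set" where
  "V_beta V R S loc = V - V_alpha V R S loc"

definition star_C :: "nat set \<Rightarrow> (nat \<Rightarrow> real) \<Rightarrow> nat set \<Rightarrow> nat set \<Rightarrow> (elem \<Rightarrow> nat) \<Rightarrow> real" where
  "star_C V w R S loc =
     Max ((\<lambda>v. real (mv R S loc v) / w v) ` V_alpha V R S loc
          \<union> (\<lambda>v. real (card R) / w v) ` V_beta V R S loc)"

end

theory Submission
  imports Defs
begin

fun sentA :: "nat set \<Rightarrow> nat \<Rightarrow> round list \<Rightarrow> elem set" where
  "sentA V v [] = {}"
| "sentA V v (r # rs) = out_load V r v \<union> sentA V v rs"

fun recvA :: "nat set \<Rightarrow> nat \<Rightarrow> round list \<Rightarrow> elem set" where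
  "recvA V v [] = {}"
| "recvA V v (r # rs) = in_load V r v \<union> recvA V v rs"

lemma fin_inv:
  "valid_rounds V K rs \<Longrightarrow> (\<forall>u. K u \<subseteq> E) \<Longrightarrow> (\<forall>r\<in>set rs. \<forall>u x. r u x \<subseteq> E)"
proof (induction rs arbitrary: K)
  case Nil then show ?case by simp
next
  case (Cons r rs)
  have v: "\<forall>u v. r u v \<subseteq> K u" and vr: "valid_rounds V (step K r) rs" using Cons.prems by auto
  have r: "\<forall>u x. r u x \<subseteq> E" using v Cons.prems(2) by blast
  have "\<forall>u. step K r u \<subseteq> E" unfolding step_def using r Cons.prems(2) by blast
  then show ?case using Cons.IH[OF vr] r by auto
qed

lemma sent_sub: "(\<forall>r\<in>set rs. \<forall>u x. r u x \<subseteq> E) \<Longrightarrow> sentA V v rs \<subseteq> E"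
  by (induction rs) (auto simp: out_load_def)

lemma recv_sub: "(\<forall>r\<in>set rs. \<forall>u x. r u x \<subseteq> E) \<Longrightarrow> recvA V v rs \<subseteq> E"
  by (induction rs) (auto simp: in_load_def)

lemma lemA:
  "valid_rounds V K rs \<Longrightarrow> x \<notin> sentA V v rs \<Longrightarrow> (\<forall>u. u \<noteq> v \<longrightarrow> x \<notin> K u) \<Longrightarrow> u \<noteq> v
   \<Longrightarrow> x \<notin> exec K rs u"
proof (induction rs arbitrary: K)
  case Nil then show ?case by simp
next
  case (Cons r rs)
  have v: "\<forall>u v. r u v \<subseteq> K u \<and> (r u v \<noteq> {} \<longrightarrow> u \<in> V \<and> v \<in> V)"
    and vr: "valid_rounds V (step K r) rs" using Cons.prems by auto
  have "\<forall>u. u \<noteq> v \<longrightarrow> x \<notin> step K r u"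
  proof (intro allI impI)
    fix u assume uv: "u \<noteq> v"
    show "x \<notin> step K r u"
    proof
      assume "x \<in> step K r u"
      then consider "x \<in> K u" | w where "x \<in> r w u" unfolding step_def by blast
      then show False
      proof cases
        case 1 then show ?thesis using Cons.prems uv by blast
      next
        case (2 w)
        show ?thesis
        proof (cases "w = v")
          case True
          then have "u \<in> V" using v 2 by blast
          then have "x \<in> out_load V r v" unfolding out_load_def using 2 True uv by blast
          then show ?thesis using Cons.prems(2) by simp
        next
          case False
          then show ?thesis using v 2 Cons.prems(3) by blast
        qed
      qed
    qed
  qed
  then show ?case using Cons.IH[OF vr] Cons.prems by simp
qed

lemma lemB:
  "valid_rounds V K rs \<Longrightarrow> x \<notin> recvA V v rs \<Longrightarrow> x \<notin> K v \<Longrightarrow> x \<notin> exec K rs v"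
proof (induction rs arbitrary: K)
  case Nil then show ?case by simp
next
  case (Cons r rs)
  have v: "\<forall>u v. r u v \<subseteq> K u \<and> (r u v \<noteq> {} \<longrightarrow> u \<in> V \<and> v \<in> V)"
    and vr: "valid_rounds V (step K r) rs" using Cons.prems by auto
  have "x \<notin> step K r v"
  proof
    assume "x \<in> step K r v"
    then consider "x \<in> K v" | w where "x \<in> r w v" unfolding step_def by blast
    then show False
    proof cases
      case 1 then show ?thesis using Cons.prems by blast
    next
      case (2 w)
      show ?thesis
      proof (cases "w = v")
        case True
        then show ?thesis using v 2 Cons.prems(3) by blast
      next
        case False
        then have "w \<in> V" using v 2 by blast
        then have "x \<in> in_load V r v" unfolding in_load_def using 2 False by blast
        then show ?thesis using Cons.prems(2) by simp
      qed
    qed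
  qed
  then show ?case using Cons.IH[OF vr] Cons.prems by simp
qed

lemma round_cost_ge:
  assumes "finite V" "v \<in> V"
  shows "real (card (out_load V r v)) / w v \<le> round_cost V w r"
    and "real (card (in_load V r v)) / w v \<le> round_cost V w r"
  unfolding round_cost_def using assms by (auto intro!: Max_ge)

lemma cost_sent:
  assumes "finite V" "v \<in> V" "w v > 0"
  shows "real (card (sentA V v rs)) / w v \<le> total_cost V w rs"
proof (induction rs)
  case Nil then show ?case by (simp add: total_cost_def)
next
  case (Cons r rs)
  have "real (card (sentA V v (r # rs))) / w v
      \<le> real (card (out_load V r v)) / w v + real (card (sentA V v rs)) / w v"
    using card_Un_le[of "out_load V r v" "sentA V v rs"] assms(3)
    by (simp add: add_divide_distrib[symmetric] divide_right_mono)
  also have "\<dots> \<le> round_cost V w r + total_cost V w rs"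
    using round_cost_ge(1)[OF assms(1,2)] Cons.IH by (intro add_mono) auto
  finally show ?case by (simp add: total_cost_def)
qed

lemma cost_recv:
  assumes "finite V" "v \<in> V" "w v > 0"
  shows "real (card (recvA V v rs)) / w v \<le> total_cost V w rs"
proof (induction rs)
  case Nil then show ?case by (simp add: total_cost_def)
next
  case (Cons r rs)
  have "real (card (recvA V v (r # rs))) / w v
      \<le> real (card (in_load V r v)) / w v + real (card (recvA V v rs)) / w v"
    using card_Un_le[of "in_load V r v" "recvA V v rs"] assms(3)
    by (simp add: add_divide_distrib[symmetric] divide_right_mono)
  also have "\<dots> \<le> round_cost V w r + total_cost V w rs"
    using round_cost_ge(2)[OF assms(1,2)] Cons.IH by (intro add_mono) auto
  finally show ?case by (simp add: total_cost_def)
qed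

lemma node_bound:
  assumes fV: "finite V" and vV: "v \<in> V" and wv: "w v > 0"
    and fR: "finite R" and fS: "finite S" and RS: "card R < card S"
    and locV: "\<forall>x\<in>input_elems R S. loc x \<in> V"
    and val: "valid_rounds V (init_state R S loc) rs"
    and cp: "computes_product V R S (exec (init_state R S loc) rs)"
  shows "real (min (mv R S loc v) (card R)) / w v \<le> 2 * total_cost V w rs"
proof -
  define K0 where "K0 = init_state R S loc"
  define E where "E = input_elems R S"
  define X where "X = sentA V v rs \<inter> K0 v"
  define Y where "Y = recvA V v rs - K0 v"
  have fE: "finite E" unfolding E_def input_elems_def using fR fS by simp
  have K0E: "\<forall>u. K0 u \<subseteq> E" unfolding K0_def init_state_def E_def by auto
  have rE: "\<forall>r\<in>set rs. \<forall>u x. r u x \<subseteq> E"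
    using fin_inv[OF val[folded K0_def] K0E] .
  have fsent: "finite (sentA V v rs)" using sent_sub[OF rE] fE finite_subset by blast
  have frecv: "finite (recvA V v rs)" using recv_sub[OF rE] fE finite_subset by blast
  have cX: "card X \<le> card (sentA V v rs)" unfolding X_def using fsent by (simp add: card_mono)
  have cY: "card Y \<le> card (recvA V v rs)" unfolding Y_def using frecv by (simp add: card_mono)
  have fX: "finite X" and fY: "finite Y" using fsent frecv unfolding X_def Y_def by auto
  have cE: "card E = card R + card S" unfolding E_def input_elems_def
    using fR fS by (subst card_Un_disjoint) (auto simp: card_image)
  have fK: "finite (K0 v)" using K0E fE finite_subset by blast
  have cK: "card (K0 v) = Nv R S loc v" unfolding Nv_def K0_def ..
  have cEK: "card (E - K0 v) = card R + card S - Nv R S loc v"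
    using cE cK K0E fK by (simp add: card_Diff_subset)
  have A: "x \<notin> exec K0 rs u" if "x \<in> K0 v" "x \<notin> X" "u \<noteq> v" for x u
  proof (rule lemA[OF val[folded K0_def]])
    show "x \<notin> sentA V v rs" using that unfolding X_def by blast
    show "\<forall>u. u \<noteq> v \<longrightarrow> x \<notin> K0 u" using that(1) unfolding K0_def init_state_def by auto
  qed (rule that(3))
  have B: "x \<notin> exec K0 rs v" if "x \<in> E" "x \<notin> K0 v" "x \<notin> Y" for x
    using lemB[OF val[folded K0_def]] that unfolding Y_def by blast
  have pair: False if "Inl r \<in> K0 v" "Inl r \<notin> X" "Inr s \<in> E" "Inr s \<notin> K0 v" "Inr s \<notin> Y" for r s
  proof -
    have "r \<in> R" using that(1) K0E unfolding E_def input_elems_def by auto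
    moreover have "s \<in> S" using that(3) unfolding E_def input_elems_def by auto
    ultimately obtain u where "u \<in> V" "Inl r \<in> exec K0 rs u" "Inr s \<in> exec K0 rs u"
      using cp unfolding computes_product_def K0_def by blast
    then show False using A[OF that(1,2)] B[OF that(3,4,5)] by (cases "u = v") auto
  qed
  have pair2: False if "Inr s \<in> K0 v" "Inr s \<notin> X" "Inl r \<in> E" "Inl r \<notin> K0 v" "Inl r \<notin> Y" for r s
  proof -
    have "s \<in> S" using that(1) K0E unfolding E_def input_elems_def by auto
    moreover have "r \<in> R" using that(3) unfolding E_def input_elems_def by auto
    ultimately obtain u where "u \<in> V" "Inl r \<in> exec K0 rs u" "Inr s \<in> exec K0 rs u"
      using cp unfolding computes_product_def K0_def by blast
    then show False using A[OF that(1,2)] B[OF that(3,4,5)] by (cases "u = v") auto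
  qed
  define Rin where "Rin = Inl ` R \<inter> K0 v"
  define Rout where "Rout = Inl ` R - K0 v"
  define Sin where "Sin = Inr ` S \<inter> K0 v"
  define Sout where "Sout = Inr ` S - K0 v"
  have d1: "Rin \<subseteq> X \<or> Sout \<subseteq> Y"
    using pair unfolding Rin_def Sout_def E_def input_elems_def by blast
  have d2: "Sin \<subseteq> X \<or> Rout \<subseteq> Y"
    using pair2 unfolding Sin_def Rout_def E_def input_elems_def by blast
  have KU: "K0 v = Rin \<union> Sin" using K0E unfolding Rin_def Sin_def E_def input_elems_def by blast
  have EKU: "E - K0 v = Rout \<union> Sout" unfolding Rout_def Sout_def E_def input_elems_def by blast
  have cR: "card Rin + card Rout = card R"
  proof -
    have "card (Inl ` R :: elem set) = card Rin + card Rout"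
      unfolding Rin_def Rout_def using fR
      by (metis Diff_Diff_Int card_Diff_subset_Int finite_Diff finite_imageI inf_le1
          add.commute card_Int_Diff)
    then show ?thesis using card_image[of "Inl::nat\<Rightarrow>elem" R] by simp
  qed
  have cS: "card Sin + card Sout = card S"
  proof -
    have "card (Inr ` S :: elem set) = card Sin + card Sout"
      unfolding Sin_def Sout_def using fS
      by (metis Diff_Diff_Int card_Diff_subset_Int finite_Diff finite_imageI inf_le1
          add.commute card_Int_Diff)
    then show ?thesis using card_image[of "Inr::nat\<Rightarrow>elem" S] by simp
  qed
  have key: "min (mv R S loc v) (card R) \<le> card X + card Y"
  proof -
    consider "Rin \<subseteq> X" "Sin \<subseteq> X" | "Sout \<subseteq> Y" "Rout \<subseteq> Y"
      | "Rin \<subseteq> X" "Rout \<subseteq> Y" | "Sout \<subseteq> Y" "Sin \<subseteq> X" using d1 d2 by blast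
    then show ?thesis
    proof cases
      case 1
      then have "K0 v \<subseteq> X" using KU by blast
      then have "card (K0 v) \<le> card X" using fX by (simp add: card_mono)
      then show ?thesis using cK unfolding mv_def by linarith
    next
      case 2
      then have "E - K0 v \<subseteq> Y" using EKU by blast
      then have "card (E - K0 v) \<le> card Y" using fY by (simp add: card_mono)
      then show ?thesis using cEK unfolding mv_def by linarith
    next
      case 3
      then have "card Rin \<le> card X" "card Rout \<le> card Y" using fX fY by (auto simp: card_mono)
      then show ?thesis using cR by linarith
    next
      case 4
      then have "card Sin \<le> card X" "card Sout \<le> card Y" using fX fY by (auto simp: card_mono)
      then show ?thesis using cS RS by linarith
    qed
  qed
  have t1: "real (card X) / w v \<le> total_cost V w rs"
    using cost_sent[of V v w rs, OF fV vV wv] cX wv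
    by (meson divide_right_mono less_imp_le of_nat_le_iff order_trans)
  have t2: "real (card Y) / w v \<le> total_cost V w rs"
    using cost_recv[of V v w rs, OF fV vV wv] cY wv
    by (meson divide_right_mono less_imp_le of_nat_le_iff order_trans)
  have "real (min (mv R S loc v) (card R)) / w v \<le> real (card X + card Y) / w v"
    using key wv by (simp add: divide_right_mono)
  also have "\<dots> = real (card X) / w v + real (card Y) / w v" by (simp add: add_divide_distrib)
  also have "\<dots> \<le> 2 * total_cost V w rs" using t1 t2 by linarith
  finally show ?thesis .
qed

theorem theorem8:
  shows "\<exists>c::real. c > 0 \<and>
    (\<forall>(V::nat set) (w::nat \<Rightarrow> real) (R::nat set) (S::nat set) (loc::elem \<Rightarrow> nat) (rs::round list).
       finite V \<and> V \<noteq> {} \<and> (\<forall>v\<in>V. w v > 0) \<and>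
       finite R \<and> finite S \<and> card R < card S \<and>
       (\<forall>x\<in>input_elems R S. loc x \<in> V) \<and>
       valid_rounds V (init_state R S loc) rs \<and>
       computes_product V R S (exec (init_state R S loc) rs)
       \<longrightarrow> total_cost V w rs \<ge> c * star_C V w R S loc)"
proof (intro exI[of _ "1/2"] conjI allI impI)
  fix V :: "nat set" and w :: "nat \<Rightarrow> real" and R S :: "nat set" and loc :: "elem \<Rightarrow> nat" and rs :: "round list"
  assume H: "finite V \<and> V \<noteq> {} \<and> (\<forall>v\<in>V. w v > 0) \<and>
       finite R \<and> finite S \<and> card R < card S \<and>
       (\<forall>x\<in>input_elems R S. loc x \<in> V) \<and>
       valid_rounds V (init_state R S loc) rs \<and>
       computes_product V R S (exec (init_state R S loc) rs)"
  then have nb: "\<And>v. v \<in> V \<Longrightarrow> real (min (mv R S loc v) (card R)) / w v \<le> 2 * total_cost V w rs"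
    using node_bound by blast
  let ?A = "(\<lambda>v. real (mv R S loc v) / w v) ` V_alpha V R S loc"
  let ?B = "(\<lambda>v. real (card R) / w v) ` V_beta V R S loc"
  have fin: "finite (?A \<union> ?B)" using H unfolding V_alpha_def V_beta_def by auto
  have ne: "?A \<union> ?B \<noteq> {}" using H unfolding V_alpha_def V_beta_def by auto
  have "\<forall>a\<in>?A \<union> ?B. a \<le> 2 * total_cost V w rs"
  proof
    fix a assume "a \<in> ?A \<union> ?B"
    then consider v where "v \<in> V_alpha V R S loc" "a = real (mv R S loc v) / w v"
      | v where "v \<in> V_beta V R S loc" "a = real (card R) / w v" by blast
    then show "a \<le> 2 * total_cost V w rs"
    proof cases
      case 1
      then have "v \<in> V" "min (mv R S loc v) (card R) = mv R S loc v"
        unfolding V_alpha_def by auto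
      then show ?thesis using nb 1 by metis
    next
      case 2
      then have "v \<in> V" "min (mv R S loc v) (card R) = card R"
        unfolding V_beta_def V_alpha_def by auto
      then show ?thesis using nb 2 by metis
    qed
  qed
  then have "star_C V w R S loc \<le> 2 * total_cost V w rs"
    unfolding star_C_def using fin ne by (intro Max.boundedI) auto
  then show "total_cost V w rs \<ge> 1/2 * star_C V w R S loc" by simp
qed simp

end
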